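(* Let $W$ be an affine extended Coxeter group (notation as in the context) and let $D$ be a Weyl chamber. Then the submonoid $X_D:=\{x\in X:\rho(x)\in\overline D\}$ of $X$ is finitely generated as a monoid (here $\rho(x)$ denotes the translation vector by which $x$ acts).
   Context: An affine extended Coxeter group consists of a group $W$, a homomorphism $\rho:W\to\mathrm{Aut}_{\mathrm{aff}}(V)$ to the affine automorphism group of a finite-dimensional real vector space $V$, a locally finite set $\mathfrak H$ of affine hyperplanes in $V$, a connected component $C_0$ of $V\setminus\bigcup_{H\in\mathfrak H}H$, and elements $\widetilde s_H\in W$ ($H\in\mathfrak H$) such that: (ACI) $\rho(w)(H)\in\mathfrak H$ for all $w,H$; (ACII) $\rho(\widetilde s_H)$ is a reflection fixing $H$; (ACIII) the group $W_0:=\rho_0(W)$ of linear parts is finite; (ACIV) $0$ is a special point (every $H\in\mathfrak H$ is parallel to some $H'\in\mathfrak H$ with $0\in H'$); (ACV) the translations in $\rho(W)$ span $V/L$ as a real vector space, where $L=\bigcap_{H\in\mathfrak H,0\in H}H$; (ACVI) $w\widetilde s_Hw^{-1}=\widetilde s_{\rho(w)(H)}$; (ACVII) if $H_1,H_2$ are walls of $C_0$ (i.e. $H\cap\overline{C_0}$ has nonempty interior in $H$) and $\rho(\widetilde s_{H_1}\widetilde s_{H_2})$ has finite order $m$, then $(\widetilde s_{H_1}\widetilde s_{H_2})^m=1$; (ACVIII) $W_0$ is generated by the images of the $\widetilde s_H$; (ACIX) $0\in\overline{C_0}$; (ACX) $X:=\rho^{-1}(V)$ (elements acting by translations) is finitely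 generated and commutative. With $H_{\alpha,k}=\{v:\alpha(v)+k=0\}$, set $\Phi=\{\alpha\in V^\vee:\forall k\in\mathbb R,\ H_{\alpha,k}\in\mathfrak H\iff k\in\mathbb Z\}$; Weyl chambers are the connected components of $V\setminus\bigcup_{\alpha\in\Phi}\ker\alpha$. *)

theory Defs
  imports "HOL-Analysis.Analysis" "HOL-Algebra.Generated_Groups"
begin

definition aff_aut :: "('v::euclidean_space \<Rightarrow> 'v) \<Rightarrow> bool" where
  "aff_aut f \<longleftrightarrow> (\<exists>A b. linear A \<and> bij A \<and> f = (\<lambda>v. A v + b))"

definition lin_part :: "('v::euclidean_space \<Rightarrow> 'v) \<Rightarrow> ('v \<Rightarrow> 'v)" where
  "lin_part f = (\<lambda>v. f v - f 0)"

definition hyp :: "('v::euclidean_space \<Rightarrow> real) \<Rightarrow> real \<Rightarrow> 'v set" where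
  "hyp \<alpha> k = {v. \<alpha> v + k = 0}"

definition affine_hyperplane :: "'v::euclidean_space set \<Rightarrow> bool" where
  "affine_hyperplane H \<longleftrightarrow> (\<exists>\<alpha> k. linear \<alpha> \<and> \<alpha> \<noteq> (\<lambda>_. 0) \<and> H = hyp \<alpha> k)"

definition locally_finite_hyps :: "'v::euclidean_space set set \<Rightarrow> bool" where
  "locally_finite_hyps \<H> \<longleftrightarrow> (\<forall>K. compact K \<longrightarrow> finite {H \<in> \<H>. H \<inter> K \<noteq> {}})"

text \<open>A (not necessarily orthogonal) affine reflection whose fixed point set is exactly H.\<close>
definition reflection_fixing :: "('v::euclidean_space \<Rightarrow> 'v) \<Rightarrow> 'v set \<Rightarrow> bool" where
  "reflection_fixing r H \<longleftrightarrow> aff_aut r \<and> r \<circ> r = id \<and> {v. r v = v} = H"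

definition translation :: "'v::euclidean_space \<Rightarrow> ('v \<Rightarrow> 'v)" where
  "translation t = (\<lambda>v. v + t)"

definition parallel_hyps :: "'v::euclidean_space set \<Rightarrow> 'v set \<Rightarrow> bool" where
  "parallel_hyps H H' \<longleftrightarrow> (\<exists>t. H' = translation t ` H)"

definition is_wall :: "'v::euclidean_space set \<Rightarrow> 'v set \<Rightarrow> bool" where
  "is_wall C H \<longleftrightarrow> (\<exists>U. openin (top_of_set H) U \<and> U \<noteq> {} \<and> U \<subseteq> H \<inter> closure C)"

inductive_set fun_generated :: "('v \<Rightarrow> 'v) set \<Rightarrow> ('v \<Rightarrow> 'v) set" for S where
  gen_id: "id \<in> fun_generated S"
| gen_comp: "f \<in> S \<Longrightarrow> g \<in> fun_generated S \<Longrightarrow> f \<circ> g \<in> fun_generated S"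
| gen_inv: "f \<in> S \<Longrightarrow> g \<in> fun_generated S \<Longrightarrow> inv_into UNIV f \<circ> g \<in> fun_generated S"

definition transl_part :: "('a, 'm) monoid_scheme \<Rightarrow> ('a \<Rightarrow> 'v::euclidean_space \<Rightarrow> 'v) \<Rightarrow> 'a set" where
  "transl_part W \<rho> = {x \<in> carrier W. \<exists>t. \<rho> x = translation t}"

definition affine_ext_coxeter ::
  "('a, 'm) monoid_scheme \<Rightarrow> ('a \<Rightarrow> 'v::euclidean_space \<Rightarrow> 'v) \<Rightarrow> 'v set set \<Rightarrow> 'v set
    \<Rightarrow> ('v set \<Rightarrow> 'a) \<Rightarrow> bool" where
  "affine_ext_coxeter W \<rho> \<H> C0 s \<longleftrightarrow>
     group W
   \<and> (\<forall>w \<in> carrier W. aff_aut (\<rho> w))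
   \<and> (\<forall>x \<in> carrier W. \<forall>y \<in> carrier W. \<rho> (x \<otimes>\<^bsub>W\<^esub> y) = \<rho> x \<circ> \<rho> y)
   \<and> (\<forall>H \<in> \<H>. affine_hyperplane H)
   \<and> locally_finite_hyps \<H>
   \<and> C0 \<in> components (- \<Union>\<H>)
   \<and> (\<forall>H \<in> \<H>. s H \<in> carrier W)
   \<comment> \<open>ACI\<close>
   \<and> (\<forall>w \<in> carrier W. \<forall>H \<in> \<H>. \<rho> w ` H \<in> \<H>)
   \<comment> \<open>ACII\<close>
   \<and> (\<forall>H \<in> \<H>. reflection_fixing (\<rho> (s H)) H)
   \<comment> \<open>ACIII\<close>
   \<and> finite ((\<lambda>w. lin_part (\<rho> w)) ` carrier W)
   \<comment> \<open>ACIV\<close>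
   \<and> (\<forall>H \<in> \<H>. \<exists>H' \<in> \<H>. 0 \<in> H' \<and> parallel_hyps H H')
   \<comment> \<open>ACV\<close>
   \<and> span ({t. translation t \<in> \<rho> ` carrier W} \<union> \<Inter>{H \<in> \<H>. 0 \<in> H}) = UNIV
   \<comment> \<open>ACVI\<close>
   \<and> (\<forall>w \<in> carrier W. \<forall>H \<in> \<H>. w \<otimes>\<^bsub>W\<^esub> s H \<otimes>\<^bsub>W\<^esub> inv\<^bsub>W\<^esub> w = s (\<rho> w ` H))
   \<comment> \<open>ACVII\<close>
   \<and> (\<forall>H1 \<in> \<H>. \<forall>H2 \<in> \<H>. is_wall C0 H1 \<longrightarrow> is_wall C0 H2 \<longrightarrow>
        (\<forall>m::nat. 0 < m \<and> (\<rho> (s H1 \<otimes>\<^bsub>W\<^esub> s H2)) ^^ m = id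
             \<and> (\<forall>k. 0 < k \<and> k < m \<longrightarrow> (\<rho> (s H1 \<otimes>\<^bsub>W\<^esub> s H2)) ^^ k \<noteq> id)
           \<longrightarrow> (s H1 \<otimes>\<^bsub>W\<^esub> s H2) [^]\<^bsub>W\<^esub> m = \<one>\<^bsub>W\<^esub>))
   \<comment> \<open>ACVIII\<close>
   \<and> (\<lambda>w. lin_part (\<rho> w)) ` carrier W = fun_generated ((\<lambda>H. lin_part (\<rho> (s H))) ` \<H>)
   \<comment> \<open>ACIX\<close>
   \<and> 0 \<in> closure C0
   \<comment> \<open>ACX\<close>
   \<and> (\<exists>F. finite F \<and> F \<subseteq> transl_part W \<rho> \<and> generate W F = transl_part W \<rho>)
   \<and> (\<forall>x \<in> transl_part W \<rho>. \<forall>y \<in> transl_part W \<rho>. x \<otimes>\<^bsub>W\<^esub> y = y \<otimes>\<^bsub>W\<^esub> x)"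

definition roots :: "'v::euclidean_space set set \<Rightarrow> ('v \<Rightarrow> real) set" where
  "roots \<H> = {\<alpha>. linear \<alpha> \<and> (\<forall>k::real. hyp \<alpha> k \<in> \<H> \<longleftrightarrow> k \<in> \<int>)}"

definition weyl_chambers :: "'v::euclidean_space set set \<Rightarrow> 'v set set" where
  "weyl_chambers \<H> = components (- (\<Union>\<alpha> \<in> roots \<H>. {v. \<alpha> v = 0}))"

inductive_set monoid_generated :: "('a, 'm) monoid_scheme \<Rightarrow> 'a set \<Rightarrow> 'a set" for W F where
  mg_one: "\<one>\<^bsub>W\<^esub> \<in> monoid_generated W F"
| mg_mult: "a \<in> F \<Longrightarrow> x \<in> monoid_generated W F \<Longrightarrow> a \<otimes>\<^bsub>W\<^esub> x \<in> monoid_generated W F"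

end

theory Submission
  imports Defs "HOL-Algebra.FiniteProduct"
begin

lemma nat_seq_mono_sub:
  fixes s :: "nat \<Rightarrow> nat"
  shows "\<exists>q::nat\<Rightarrow>nat. strict_mono q \<and> mono (\<lambda>n. s (q n))"
proof -
  obtain f :: "nat \<Rightarrow> nat" where f: "strict_mono f" "monoseq (\<lambda>n. s (f n))"
    using seq_monosub by blast
  show ?thesis
  proof (cases "\<forall>m. \<forall>n\<ge>m. s (f m) \<le> s (f n)")
    case True
    then have "mono (\<lambda>n. s (f n))" by (simp add: incseq_def)
    then show ?thesis using f(1) by blast
  next
    case False
    then have dec: "\<forall>m. \<forall>n\<ge>m. s (f n) \<le> s (f m)" using f(2) by (auto simp: monoseq_def)
    obtain N where N: "\<forall>y. s (f N) \<le> s (f y)"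
      using ex_has_least_nat[of "\<lambda>_. True" 0 "\<lambda>n. s (f n)"] by auto
    have c: "\<And>n. s (f (n + N)) = s (f N)"
      using dec N by (meson le_add2 le_antisym)
    have "strict_mono (\<lambda>n. f (n + N))"
      using f(1) by (simp add: strict_mono_def)
    moreover have "mono (\<lambda>n. s (f (n + N)))"
      by (simp add: c mono_def)
    ultimately show ?thesis by blast
  qed
qed

lemma dickson_sub:
  fixes K :: "('b \<Rightarrow> nat) set" and x :: "nat \<Rightarrow> 'b"
  assumes "finite K"
  shows "\<exists>r::nat\<Rightarrow>nat. strict_mono r \<and> (\<forall>k\<in>K. mono (\<lambda>n. k (x (r n))))"
  using assms
proof (induction K rule: finite_induct)
  case empty
  have "strict_mono (id::nat\<Rightarrow>nat)" by (simp add: strict_mono_def)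
  then show ?case by blast
next
  case (insert k K)
  then obtain r :: "nat \<Rightarrow> nat" where r: "strict_mono r" "\<forall>k\<in>K. mono (\<lambda>n. k (x (r n)))" by blast
  obtain q :: "nat \<Rightarrow> nat" where q: "strict_mono q" "mono (\<lambda>n. k (x (r (q n))))"
    using nat_seq_mono_sub[of "\<lambda>n. k (x (r n))"] by blast
  have "strict_mono (\<lambda>n. r (q n))"
    using r(1) q(1) by (simp add: strict_mono_def)
  moreover have "\<forall>k'\<in>K. mono (\<lambda>n. k' (x (r (q n))))"
  proof
    fix k' assume "k' \<in> K"
    then have m: "mono (\<lambda>n. k' (x (r n)))" using r by blast
    have "mono q" using q(1) strict_mono_mono by blast
    then show "mono (\<lambda>n. k' (x (r (q n))))" using m by (simp add: mono_def)
  qed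
  ultimately show ?case using q(2) by blast
qed

context comm_monoid begin

lemma hom_one:
  assumes "\<forall>x\<in>carrier G. \<forall>y\<in>carrier G. h (x \<otimes> y) = h x + (h y::int)"
  shows "h \<one> = 0"
  using assms by (metis add_cancel_left_left one_closed r_one)

lemma hom_pow:
  assumes "\<forall>x\<in>carrier G. \<forall>y\<in>carrier G. h (x \<otimes> y) = h x + (h y::int)" "x \<in> carrier G"
  shows "h (x [^] (n::nat)) = int n * h x"
proof (induction n)
  case 0 then show ?case using hom_one[OF assms(1)] by simp
next
  case (Suc n) then show ?case using assms by (simp add: algebra_simps)
qed

lemma hom_finprod:
  assumes "\<forall>x\<in>carrier G. \<forall>y\<in>carrier G. h (x \<otimes> y) = h x + (h y::int)"
    and "finite A" "A \<subseteq> carrier G"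
  shows "h (finprod G (\<lambda>e. e [^] (u e::nat)) A) = (\<Sum>e\<in>A. int (u e) * h e)"
  using assms(2,3)
proof (induction A rule: finite_induct)
  case empty then show ?case using hom_one[OF assms(1)] by simp
next
  case (insert a A)
  have P: "(\<lambda>e. e [^] u e) \<in> A \<rightarrow> carrier G" using insert by auto
  have "finprod G (\<lambda>e. e [^] u e) (insert a A) = a [^] u a \<otimes> finprod G (\<lambda>e. e [^] u e) A"
    using insert P by (subst finprod_insert) auto
  then show ?case using insert P assms(1) hom_pow[OF assms(1)] by simp
qed

lemma finprod_pow_add:
  assumes "A \<subseteq> carrier G"
  shows "finprod G (\<lambda>e. e [^] (u e + v e::nat)) A
         = finprod G (\<lambda>e. e [^] u e) A \<otimes> finprod G (\<lambda>e. e [^] v e) A"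
proof -
  have "finprod G (\<lambda>e. e [^] (u e + v e)) A = finprod G (\<lambda>e. e [^] u e \<otimes> e [^] v e) A"
    using assms by (intro finprod_cong') (auto simp: nat_pow_mult)
  also have "\<dots> = finprod G (\<lambda>e. e [^] u e) A \<otimes> finprod G (\<lambda>e. e [^] v e) A"
    using assms by (intro finprod_multf) auto
  finally show ?thesis .
qed

lemma finprod_pow_single:
  assumes "A \<subseteq> carrier G" "finite A" "a \<in> A"
  shows "finprod G (\<lambda>e. e [^] (if e = a then 1 else 0::nat)) A = a"
proof -
  have "finprod G (\<lambda>e. e [^] (if e = a then 1 else 0::nat)) A = (\<Otimes>j\<in>A. if a = j then j else \<one>)"
    using assms by (intro finprod_cong') auto
  also have "\<dots> = a" using assms by (intro finprod_singleton) auto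
  finally show ?thesis .
qed

lemma mg_carrier:
  assumes "F \<subseteq> carrier G"
  shows "monoid_generated G F \<subseteq> carrier G"
proof
  fix x assume "x \<in> monoid_generated G F"
  then show "x \<in> carrier G" by induction (use assms in auto)
qed

end

context comm_monoid begin

lemma mg_mult_closed:
  assumes "F \<subseteq> carrier G" "x \<in> monoid_generated G F" "y \<in> monoid_generated G F"
  shows "x \<otimes> y \<in> monoid_generated G F"
  using assms(2)
proof induction
  case mg_one then show ?case using assms(3) mg_carrier[OF assms(1)] by auto
next
  case (mg_mult a x)
  have "a \<otimes> x \<otimes> y = a \<otimes> (x \<otimes> y)"
    using mg_mult assms mg_carrier[OF assms(1)] by (auto intro!: m_assoc)
  then show ?case using mg_mult monoid_generated.mg_mult by metis
qed

lemma partB: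
  fixes Hs :: "('a \<Rightarrow> int) set"
  assumes finE: "finite E" and Ec: "E \<subseteq> carrier G"
    and gen: "carrier G \<subseteq> monoid_generated G E"
    and finHs: "finite Hs"
    and add: "\<forall>h\<in>Hs. \<forall>x\<in>carrier G. \<forall>y\<in>carrier G. h (x \<otimes> y) = h x + h y"
  shows "\<exists>F. finite F \<and> F \<subseteq> {x\<in>carrier G. \<forall>h\<in>Hs. 0 \<le> h x}
            \<and> monoid_generated G F = {x\<in>carrier G. \<forall>h\<in>Hs. 0 \<le> h x}"
proof -
  define S where "S = {x\<in>carrier G. \<forall>h\<in>Hs. 0 \<le> h x}"
  define phi where "phi = (\<lambda>u::'a \<Rightarrow> nat. finprod G (\<lambda>e. e [^] u e) E)"
  define L where "L = (\<lambda>h u. \<Sum>e\<in>E. int ((u::'a\<Rightarrow>nat) e) * (h::'a\<Rightarrow>int) e)"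
  define V where "V = {u. (\<forall>e. e \<notin> E \<longrightarrow> u e = 0) \<and> (\<forall>h\<in>Hs. 0 \<le> L h u)}"
  define le where "le = (\<lambda>u v. (\<forall>e\<in>E. u e \<le> v e) \<and> (\<forall>h\<in>Hs. L h u \<le> L h v))"
  define sz where "sz = (\<lambda>u. \<Sum>e\<in>E. (u::'a\<Rightarrow>nat) e)"
  define M where "M = {u\<in>V. u \<noteq> (\<lambda>_. 0) \<and> (\<forall>w\<in>V. w \<noteq> (\<lambda>_. 0) \<longrightarrow> le w u \<longrightarrow> w = u)}"
  have phiC: "phi u \<in> carrier G" for u
    unfolding phi_def using Ec by (intro finprod_closed) auto
  have phi_add: "phi (\<lambda>e. u e + v e) = phi u \<otimes> phi v" for u v
    unfolding phi_def using finprod_pow_add[OF Ec] by simp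
  have hphi: "h (phi u) = L h u" if "h \<in> Hs" for h u
    unfolding phi_def L_def using hom_finprod[of h E u] add that finE Ec by auto
  have phi_cong: "phi u = phi v" if "\<forall>e\<in>E. u e = v e" for u v
    unfolding phi_def using that Ec by (intro finprod_cong') auto
  have phiV: "phi ` V = S"
  proof
    show "phi ` V \<subseteq> S" unfolding S_def V_def using phiC hphi by auto
  next
    show "S \<subseteq> phi ` V"
    proof
      fix x assume xS: "x \<in> S"
      have "x \<in> monoid_generated G E" using xS gen unfolding S_def by auto
      then have "\<exists>u. phi u = x"
      proof induction
        case mg_one
        have "phi (\<lambda>_. 0) = \<one>" unfolding phi_def by simp
        then show ?case by blast
      next
        case (mg_mult a x)
        then obtain u where u: "phi u = x" by blast
        have "phi (\<lambda>e. (if e = a then 1 else 0) + u e) = a \<otimes> x"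
          using phi_add u finprod_pow_single[OF Ec finE mg_mult(1)] unfolding phi_def by simp
        then show ?case by blast
      qed
      then obtain u where u: "phi u = x" by blast
      define u' where "u' = (\<lambda>e. if e \<in> E then u e else 0)"
      have "phi u' = x" using u phi_cong[of u' u] unfolding u'_def by simp
      moreover have "u' \<in> V"
        unfolding V_def using xS hphi \<open>phi u' = x\<close> unfolding S_def u'_def by auto
      ultimately show "x \<in> phi ` V" by blast
    qed
  qed
  have zero_iff: "u = (\<lambda>_. 0) \<longleftrightarrow> sz u = 0" if "u \<in> V" for u
    using that finE unfolding V_def sz_def by (auto simp: fun_eq_iff)
  have gen_M: "\<forall>u\<in>V. sz u = n \<longrightarrow> phi u \<in> monoid_generated G (phi ` M)" for n
  proof (induction n rule: less_induct)
    case (less n)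
    show ?case
    proof (intro ballI impI)
      fix u assume uV: "u \<in> V" and szu: "sz u = n"
      show "phi u \<in> monoid_generated G (phi ` M)"
      proof (cases "u = (\<lambda>_. 0)")
        case True
        then have "phi u = \<one>" unfolding phi_def by simp
        then show ?thesis by (simp add: monoid_generated.mg_one)
      next
        case False
        define C where "C = {w\<in>V. w \<noteq> (\<lambda>_. 0) \<and> le w u}"
        have "u \<in> C" unfolding C_def le_def using uV False by auto
        then obtain w where wC: "w \<in> C" and wmin: "\<forall>w'\<in>C. sz w \<le> sz w'"
          using ex_has_least_nat[of "\<lambda>w. w \<in> C" u sz] by blast
        have wV: "w \<in> V" and wnz: "w \<noteq> (\<lambda>_. 0)" and wu: "le w u" using wC unfolding C_def by auto
        have wM: "w \<in> M"
        proof -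
          have "w' = w" if w'V: "w' \<in> V" and w'nz: "w' \<noteq> (\<lambda>_. 0)" and w'w: "le w' w" for w'
          proof -
            have "le w' u" using w'w wu unfolding le_def by (meson order_trans)
            then have "w' \<in> C" unfolding C_def using w'V w'nz by auto
            then have "sz w \<le> sz w'" using wmin by blast
            moreover have le1: "\<forall>e\<in>E. w' e \<le> w e" using w'w unfolding le_def by auto
            ultimately have "sz w' = sz w" unfolding sz_def by (meson antisym sum_mono)
            then have "\<forall>e\<in>E. w' e = w e"
              using le1 finE unfolding sz_def by (metis sum_mono_inv)
            then show "w' = w" using w'V wV unfolding V_def by (auto simp: fun_eq_iff)
          qed
          then show ?thesis unfolding M_def using wV wnz by blast
        qed
        define d where "d = (\<lambda>e. u e - w e)"
        have wle: "\<forall>e\<in>E. w e \<le> u e" using wu unfolding le_def by auto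
        have Ld: "L h d = L h u - L h w" for h
          unfolding L_def d_def using wle
          by (simp add: sum_subtractf[symmetric] of_nat_diff algebra_simps cong: sum.cong)
        have dV: "d \<in> V"
        proof -
          have "\<forall>h\<in>Hs. L h w \<le> L h u" using wu by (simp add: le_def)
          then have "\<forall>h\<in>Hs. 0 \<le> L h d" by (simp add: Ld)
          moreover have "\<forall>e. e \<notin> E \<longrightarrow> d e = 0" using uV by (simp add: V_def d_def)
          ultimately show ?thesis by (simp add: V_def)
        qed
        have szd: "sz d = sz u - sz w"
          unfolding sz_def d_def using wle finE by (simp add: sum_subtractf_nat)
        have "sz w > 0" using zero_iff[OF wV] wnz by simp
        moreover have "sz w \<le> sz u" unfolding sz_def using wle by (simp add: sum_mono)
        ultimately have "sz d < n" using szd szu by simp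
        then have dM: "phi d \<in> monoid_generated G (phi ` M)" using less dV by blast
        have "phi u = phi (\<lambda>e. w e + d e)"
          using wle by (intro phi_cong) (auto simp: d_def)
        also have "\<dots> = phi w \<otimes> phi d" by (rule phi_add)
        finally show ?thesis using dM wM by (simp add: monoid_generated.mg_mult)
      qed
    qed
  qed
  have finM: "finite M"
  proof (rule ccontr)
    assume "infinite M"
    then obtain x :: "nat \<Rightarrow> ('a \<Rightarrow> nat)" where xi: "inj x" and xr: "range x \<subseteq> M"
      using infinite_iff_countable_subset[THEN iffD1] by metis
    define K where "K = (\<lambda>e u. (u::'a\<Rightarrow>nat) e) ` E \<union> (\<lambda>h u. nat (L h u)) ` Hs"
    have "finite K" unfolding K_def using finE finHs by (intro finite_UnI finite_imageI)
    then obtain r :: "nat \<Rightarrow> nat" where r: "strict_mono r" "\<forall>k\<in>K. mono (\<lambda>n. k (x (r n)))"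
      using dickson_sub[of K x] by metis
    have kle: "k (x (r 0)) \<le> k (x (r 1))" if "k \<in> K" for k
      using r(2) that unfolding mono_def by simp
    have m0: "x (r 0) \<in> M" and x1M: "x (r 1) \<in> M" using xr by (simp_all add: range_subsetD)
    have x0V: "x (r 0) \<in> V" and x0nz: "x (r 0) \<noteq> (\<lambda>_. 0)" using m0 by (simp_all add: M_def)
    have x1V: "x (r 1) \<in> V" using x1M by (simp add: M_def)
    have "le (x (r 0)) (x (r 1))"
      unfolding le_def
    proof (intro conjI ballI)
      fix e assume "e \<in> E"
      then have "(\<lambda>u. u e) \<in> K" unfolding K_def by (intro UnI1 imageI)
      then show "x (r 0) e \<le> x (r 1) e" using kle by fastforce
    next
      fix h assume hH: "h \<in> Hs"
      then have "(\<lambda>u. nat (L h u)) \<in> K" unfolding K_def by (intro UnI2 imageI)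
      then have "nat (L h (x (r 0))) \<le> nat (L h (x (r 1)))" using kle by fastforce
      moreover have "0 \<le> L h (x (r 0))" "0 \<le> L h (x (r 1))" using x0V x1V hH unfolding V_def by auto
      ultimately show "L h (x (r 0)) \<le> L h (x (r 1))" by simp
    qed
    moreover have "\<forall>w\<in>V. w \<noteq> (\<lambda>_. 0) \<longrightarrow> le w (x (r 1)) \<longrightarrow> w = x (r 1)"
      using x1M by (simp add: M_def)
    ultimately have "x (r 0) = x (r 1)" using x0V x0nz by blast
    then have "r 0 = r 1" using xi by (simp add: inj_eq)
    then show False using r(1) by (simp add: strict_mono_eq)
  qed
  have MV: "M \<subseteq> V" unfolding M_def by auto
  have SC: "S \<subseteq> carrier G" unfolding S_def by auto
  have FS: "phi ` M \<subseteq> S" using MV phiV by auto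
  have "monoid_generated G (phi ` M) \<subseteq> S"
  proof
    fix x assume "x \<in> monoid_generated G (phi ` M)"
    then show "x \<in> S"
    proof induction
      case mg_one
      have "\<forall>h\<in>Hs. h \<one> = 0" using add hom_one by blast
      then show ?case unfolding S_def by auto
    next
      case (mg_mult a x)
      then have "a \<in> S" using FS by auto
      then show ?case using mg_mult add unfolding S_def by auto
    qed
  qed
  moreover have "S \<subseteq> monoid_generated G (phi ` M)" using gen_M phiV by blast
  ultimately show ?thesis using finM FS unfolding S_def by blast
qed

end

lemma mg_update: "monoid_generated (W\<lparr>carrier := X\<rparr>) F = monoid_generated W F"
proof
  show "monoid_generated (W\<lparr>carrier := X\<rparr>) F \<subseteq> monoid_generated W F"
  proof
    fix x assume "x \<in> monoid_generated (W\<lparr>carrier := X\<rparr>) F"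
    then show "x \<in> monoid_generated W F"
      by induction (auto intro: monoid_generated.intros)
  qed
next
  show "monoid_generated W F \<subseteq> monoid_generated (W\<lparr>carrier := X\<rparr>) F"
  proof
    fix x assume "x \<in> monoid_generated W F"
    then show "x \<in> monoid_generated (W\<lparr>carrier := X\<rparr>) F"
    proof induction
      case mg_one
      then show ?case using monoid_generated.mg_one[of "W\<lparr>carrier := X\<rparr>" F] by simp
    next
      case (mg_mult a x)
      then show ?case using monoid_generated.mg_mult[of a F x "W\<lparr>carrier := X\<rparr>"] by simp
    qed
  qed
qed

lemma floor_add_Ints: "(a::real) \<in> \<int> \<Longrightarrow> b \<in> \<int> \<Longrightarrow> \<lfloor>a + b\<rfloor> = \<lfloor>a\<rfloor> + \<lfloor>b\<rfloor>"
  by (metis Ints_cases floor_of_int of_int_add)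

lemma sgn_Ints: "sgn (r::real) \<in> \<int>"
  by (simp add: sgn_if)

lemma sign_lemma:
  fixes a b :: real
  assumes "a \<noteq> 0" "b \<noteq> 0" "\<not> 0 < sgn a * b"
  shows "(a < 0 \<and> 0 < b) \<or> (b < 0 \<and> 0 < a)"
  using assms by (auto simp: sgn_if split: if_splits)

lemma hyp_translate:
  assumes "linear \<alpha>"
  shows "translation t ` hyp \<alpha> 0 = hyp \<alpha> (- \<alpha> t)"
proof
  show "translation t ` hyp \<alpha> 0 \<subseteq> hyp \<alpha> (- \<alpha> t)"
    using assms by (auto simp: hyp_def translation_def linear_add)
next
  show "hyp \<alpha> (- \<alpha> t) \<subseteq> translation t ` hyp \<alpha> 0"
  proof
    fix w assume "w \<in> hyp \<alpha> (- \<alpha> t)"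
    then have "w - t \<in> hyp \<alpha> 0" using assms by (simp add: hyp_def linear_diff)
    moreover have "w = translation t (w - t)" by (simp add: translation_def)
    ultimately show "w \<in> translation t ` hyp \<alpha> 0" by blast
  qed
qed

lemma chamber_closure:
  fixes \<H> :: "'v::euclidean_space set set"
  assumes lf: "locally_finite_hyps \<H>" and Dw: "D \<in> weyl_chambers \<H>"
  shows "\<exists>R d0. finite R \<and> R \<subseteq> roots \<H> \<and> d0 \<in> D \<and>
           closure D = {v. \<forall>\<beta>\<in>R. 0 \<le> sgn (\<beta> d0) * \<beta> v}"
proof -
  have rlin: "linear \<alpha>" if "\<alpha> \<in> roots \<H>" for \<alpha> using that by (simp add: roots_def)
  have rH: "hyp \<alpha> 0 \<in> \<H>" if "\<alpha> \<in> roots \<H>" for \<alpha> using that by (simp add: roots_def)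
  define Ker where "Ker = (\<lambda>\<alpha>. hyp \<alpha> 0) ` roots \<H>"
  have "Ker \<subseteq> {H \<in> \<H>. H \<inter> {0} \<noteq> {}}"
    unfolding Ker_def using rH rlin by (auto simp: hyp_def linear_0)
  moreover have "finite {H \<in> \<H>. H \<inter> {0} \<noteq> {}}"
    using lf compact_sing[of "0::'v"] unfolding locally_finite_hyps_def by blast
  ultimately have finK: "finite Ker" by (rule finite_subset)
  define rep where "rep = (\<lambda>K. SOME \<alpha>. \<alpha> \<in> roots \<H> \<and> hyp \<alpha> 0 = K)"
  have rep: "rep K \<in> roots \<H> \<and> hyp (rep K) 0 = K" if "K \<in> Ker" for K
  proof -
    have "\<exists>\<alpha>. \<alpha> \<in> roots \<H> \<and> hyp \<alpha> 0 = K" using that unfolding Ker_def by blast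
    then show ?thesis unfolding rep_def by (rule someI_ex)
  qed
  define R where "R = rep ` Ker"
  have finR: "finite R" unfolding R_def using finK by simp
  have Rr: "R \<subseteq> roots \<H>" unfolding R_def using rep by auto
  have Rcov: "\<exists>\<beta>\<in>R. hyp \<beta> 0 = hyp \<alpha> 0" if "\<alpha> \<in> roots \<H>" for \<alpha>
  proof -
    have "hyp \<alpha> 0 \<in> Ker" using that unfolding Ker_def by blast
    then show ?thesis using rep unfolding R_def by blast
  qed
  define U where "U = (\<Union>\<alpha> \<in> roots \<H>. {v. \<alpha> v = 0})"
  have Dc: "D \<in> components (- U)" using Dw unfolding weyl_chambers_def U_def .
  obtain d0 where d0: "d0 \<in> D" using in_components_nonempty[OF Dc] by blast
  have DU: "D \<subseteq> - U" using in_components_subset[OF Dc] .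
  have Dconn: "connected D" using in_components_connected[OF Dc] .
  have nz: "\<beta> v \<noteq> 0" if "\<beta> \<in> R" "v \<in> D" for \<beta> v
    using that DU Rr unfolding U_def by blast
  define P where "P = {v. \<forall>\<beta>\<in>R. 0 < sgn (\<beta> d0) * \<beta> v}"
  define Q where "Q = {v. \<forall>\<beta>\<in>R. 0 \<le> sgn (\<beta> d0) * \<beta> v}"
  have DP: "D \<subseteq> P"
  proof
    fix v assume vD: "v \<in> D"
    show "v \<in> P" unfolding P_def
    proof (unfold mem_Collect_eq, intro ballI)
      fix \<beta> assume bR: "\<beta> \<in> R"
      show "0 < sgn (\<beta> d0) * \<beta> v"
      proof (rule ccontr)
        assume neg: "\<not> 0 < sgn (\<beta> d0) * \<beta> v"
        have cont: "continuous_on D \<beta>"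
          using rlin bR Rr linear_conv_bounded_linear linear_continuous_on by blast
        have conn: "connected (\<beta> ` D)" using connected_continuous_image[OF cont Dconn] .
        have "0 \<in> \<beta> ` D"
        proof -
          have a: "\<beta> d0 \<in> \<beta> ` D" "\<beta> v \<in> \<beta> ` D" using d0 vD by auto
          have iv: "\<And>x y z. x \<in> \<beta> ` D \<Longrightarrow> y \<in> \<beta> ` D \<Longrightarrow> x \<le> z \<Longrightarrow> z \<le> y \<Longrightarrow> z \<in> \<beta> ` D"
            using conn unfolding connected_iff_interval by blast
          from sign_lemma[OF nz[OF bR d0] nz[OF bR vD] neg]
          show ?thesis
          proof
            assume "\<beta> d0 < 0 \<and> 0 < \<beta> v"
            then show ?thesis using iv[OF a(1) a(2)] by simp
          next
            assume "\<beta> v < 0 \<and> 0 < \<beta> d0"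
            then show ?thesis using iv[OF a(2) a(1)] by simp
          qed
        qed
        then obtain d where "d \<in> D" "\<beta> d = 0" by (metis imageE)
        then show False using nz bR by blast
      qed
    qed
  qed
  have PU: "P \<subseteq> - U"
  proof
    fix v assume vP: "v \<in> P"
    show "v \<in> - U"
    proof
      assume "v \<in> U"
      then obtain \<alpha> where a: "\<alpha> \<in> roots \<H>" "\<alpha> v = 0" unfolding U_def by blast
      then obtain \<beta> where b: "\<beta> \<in> R" "hyp \<beta> 0 = hyp \<alpha> 0" using Rcov by blast
      have "v \<in> hyp \<alpha> 0" using a by (simp add: hyp_def)
      then have "v \<in> hyp \<beta> 0" using b by simp
      then have "\<beta> v = 0" by (simp add: hyp_def)
      then show False using vP b unfolding P_def by auto
    qed
  qed
  have convP: "convex P"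
    unfolding convex_def
  proof (intro allI ballI impI)
    fix x y and u v :: real
    assume xP: "x \<in> P" and yP: "y \<in> P" and uv: "0 \<le> u" "0 \<le> v" "u + v = 1"
    show "u *\<^sub>R x + v *\<^sub>R y \<in> P" unfolding P_def
    proof (unfold mem_Collect_eq, intro ballI)
      fix \<beta> assume bR: "\<beta> \<in> R"
      have lin: "linear \<beta>" using bR Rr rlin by blast
      have e: "sgn (\<beta> d0) * \<beta> (u *\<^sub>R x + v *\<^sub>R y)
             = u * (sgn (\<beta> d0) * \<beta> x) + v * (sgn (\<beta> d0) * \<beta> y)"
        using lin by (simp add: linear_add linear_scale algebra_simps)
      have px: "0 < sgn (\<beta> d0) * \<beta> x" and py: "0 < sgn (\<beta> d0) * \<beta> y"
        using xP yP bR unfolding P_def by auto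
      have "0 < u * (sgn (\<beta> d0) * \<beta> x) + v * (sgn (\<beta> d0) * \<beta> y)"
      proof (cases "u = 0")
        case True then have "v = 1" using uv by simp
        then show ?thesis using True py by simp
      next
        case False then have "0 < u" using uv by simp
        then have "0 < u * (sgn (\<beta> d0) * \<beta> x)" using px by simp
        moreover have "0 \<le> v * (sgn (\<beta> d0) * \<beta> y)" using uv py by simp
        ultimately show ?thesis by simp
      qed
      then show "0 < sgn (\<beta> d0) * \<beta> (u *\<^sub>R x + v *\<^sub>R y)" using e by simp
    qed
  qed
  have PD: "P \<subseteq> D"
    using components_maximal[OF Dc convex_connected[OF convP] PU] d0 DP by blast
  have DeqP: "D = P" using DP PD by blast
  have closedQ: "closed Q"
  proof -
    have "Q = (\<Inter>\<beta>\<in>R. {v. 0 \<le> sgn (\<beta> d0) * \<beta> v})" unfolding Q_def by auto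
    moreover have "closed {v. 0 \<le> sgn (\<beta> d0) * \<beta> v}" if "\<beta> \<in> R" for \<beta>
    proof -
      have "continuous_on UNIV \<beta>"
        using rlin that Rr linear_conv_bounded_linear linear_continuous_on by blast
      then have "continuous_on UNIV (\<lambda>v. sgn (\<beta> d0) * \<beta> v)"
        by (intro continuous_intros)
      then show ?thesis using closed_Collect_le[of "\<lambda>_. 0" "\<lambda>v. sgn (\<beta> d0) * \<beta> v"] continuous_on_const by auto
    qed
    ultimately show ?thesis by (simp add: closed_INT)
  qed
  have "closure D \<subseteq> Q"
    using closure_minimal[of D Q] closedQ DP unfolding P_def Q_def by fastforce
  moreover have "Q \<subseteq> closure D"
  proof
    fix v assume vQ: "v \<in> Q"
    show "v \<in> closure D" unfolding closure_approachable
    proof (intro allI impI)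
      fix e :: real assume e: "0 < e"
      define n where "n = norm (d0 - v)"
      define t where "t = min 1 (e / (n + 1))"
      have n0: "0 \<le> n" unfolding n_def by simp
      have t0: "0 < t" unfolding t_def using e n0 by simp
      have t1: "t \<le> 1" unfolding t_def by simp
      have tn: "t * n < e"
      proof -
        have "t \<le> e / (n + 1)" unfolding t_def by simp
        then have "t * n \<le> e / (n + 1) * n" using n0 by (rule mult_right_mono)
        also have "\<dots> < e" using e n0 by (simp add: field_simps)
        finally show ?thesis .
      qed
      define y where "y = v + t *\<^sub>R (d0 - v)"
      have "y \<in> P" unfolding P_def
      proof (unfold mem_Collect_eq, intro ballI)
        fix \<beta> assume bR: "\<beta> \<in> R"
        have lin: "linear \<beta>" using bR Rr rlin by blast
        have e1: "sgn (\<beta> d0) * \<beta> y = (1 - t) * (sgn (\<beta> d0) * \<beta> v) + t * (sgn (\<beta> d0) * \<beta> d0)"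
          unfolding y_def using lin by (simp add: linear_add linear_diff linear_scale algebra_simps)
        have "0 \<le> sgn (\<beta> d0) * \<beta> v" using vQ bR unfolding Q_def by auto
        then have "0 \<le> (1 - t) * (sgn (\<beta> d0) * \<beta> v)" using t1 by simp
        moreover have "0 < sgn (\<beta> d0) * \<beta> d0" using DP d0 bR unfolding P_def by auto
        then have "0 < t * (sgn (\<beta> d0) * \<beta> d0)" using t0 by simp
        ultimately show "0 < sgn (\<beta> d0) * \<beta> y" using e1 by simp
      qed
      moreover have "dist y v < e"
        unfolding y_def dist_norm using t0 tn by (simp add: n_def)
      ultimately show "\<exists>y\<in>D. dist y v < e" using DeqP by blast
    qed
  qed
  ultimately have "closure D = Q" by blast
  then show ?thesis using finR Rr d0 unfolding Q_def by blast
qed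

theorem lemma3p3p11:
  fixes W :: "('a, 'm) monoid_scheme"
    and \<rho> :: "'a \<Rightarrow> 'v::euclidean_space \<Rightarrow> 'v"
    and \<H> :: "'v set set" and C0 :: "'v set" and s :: "'v set \<Rightarrow> 'a"
    and D :: "'v set"
  assumes "affine_ext_coxeter W \<rho> \<H> C0 s"
    and "D \<in> weyl_chambers \<H>"
  shows "\<exists>F. finite F \<and> F \<subseteq> {x \<in> transl_part W \<rho>. \<rho> x 0 \<in> closure D}
           \<and> monoid_generated W F = {x \<in> transl_part W \<rho>. \<rho> x 0 \<in> closure D}"
proof -
  have grp: "group W" using assms(1) unfolding affine_ext_coxeter_def by (elim conjE) assumption
  have hom: "\<forall>x \<in> carrier W. \<forall>y \<in> carrier W. \<rho> (x \<otimes>\<^bsub>W\<^esub> y) = \<rho> x \<circ> \<rho> y"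
    using assms(1) unfolding affine_ext_coxeter_def by (elim conjE) assumption
  have lf: "locally_finite_hyps \<H>" using assms(1) unfolding affine_ext_coxeter_def by (elim conjE) assumption
  have ACI: "\<forall>w \<in> carrier W. \<forall>H \<in> \<H>. \<rho> w ` H \<in> \<H>"
    using assms(1) unfolding affine_ext_coxeter_def by (elim conjE) assumption
  obtain F0 where F0: "finite F0" "F0 \<subseteq> transl_part W \<rho>" "generate W F0 = transl_part W \<rho>"
    using assms(1) unfolding affine_ext_coxeter_def by (elim conjE) blast
  have comm: "\<forall>x \<in> transl_part W \<rho>. \<forall>y \<in> transl_part W \<rho>. x \<otimes>\<^bsub>W\<^esub> y = y \<otimes>\<^bsub>W\<^esub> x"
    using assms(1) unfolding affine_ext_coxeter_def by (elim conjE) assumption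
  define X where "X = transl_part W \<rho>"
  interpret W: group W by (rule grp)
  have XC: "X \<subseteq> carrier W" unfolding X_def transl_part_def by auto
  have tr: "\<rho> x = translation (\<rho> x 0)" if xX: "x \<in> X" for x
  proof -
    obtain t where "\<rho> x = translation t" using xX unfolding X_def transl_part_def by blast
    then show ?thesis by (simp add: translation_def)
  qed
  have tau_add: "\<rho> (x \<otimes>\<^bsub>W\<^esub> y) 0 = \<rho> x 0 + \<rho> y 0" if "x \<in> X" "y \<in> X" for x y
  proof -
    have xy: "x \<in> carrier W" "y \<in> carrier W" using that XC by auto
    have "\<rho> (x \<otimes>\<^bsub>W\<^esub> y) = \<rho> x \<circ> \<rho> y" using hom xy by blast
    then have "\<rho> (x \<otimes>\<^bsub>W\<^esub> y) 0 = \<rho> x (\<rho> y 0)" by simp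
    also have "\<dots> = translation (\<rho> x 0) (\<rho> y 0)" using fun_cong[OF tr[OF that(1)], of "\<rho> y 0"] .
    also have "\<dots> = \<rho> y 0 + \<rho> x 0" unfolding translation_def by simp
    finally show ?thesis by simp
  qed
  have F0C: "F0 \<subseteq> carrier W" using F0(2) XC unfolding X_def by (rule subset_trans)
  have Xgen: "X = generate W F0" using F0(3) unfolding X_def by (rule sym)
  have Xmult: "x \<otimes>\<^bsub>W\<^esub> y \<in> X" if "x \<in> X" "y \<in> X" for x y
    using that unfolding Xgen by (rule generate.eng)
  have Xone: "\<one>\<^bsub>W\<^esub> \<in> X" unfolding Xgen by (rule generate.one)
  define H where "H = W\<lparr>carrier := X\<rparr>"
  have cmH: "comm_monoid H"
    unfolding H_def
  proof (rule comm_monoidI)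
    fix x y assume "x \<in> carrier (W\<lparr>carrier := X\<rparr>)" "y \<in> carrier (W\<lparr>carrier := X\<rparr>)"
    then show "x \<otimes>\<^bsub>W\<lparr>carrier := X\<rparr>\<^esub> y \<in> carrier (W\<lparr>carrier := X\<rparr>)" using Xmult by simp
  next
    show "\<one>\<^bsub>W\<lparr>carrier := X\<rparr>\<^esub> \<in> carrier (W\<lparr>carrier := X\<rparr>)" using Xone by simp
  next
    fix x y z assume "x \<in> carrier (W\<lparr>carrier := X\<rparr>)" "y \<in> carrier (W\<lparr>carrier := X\<rparr>)" "z \<in> carrier (W\<lparr>carrier := X\<rparr>)"
    then show "x \<otimes>\<^bsub>W\<lparr>carrier := X\<rparr>\<^esub> y \<otimes>\<^bsub>W\<lparr>carrier := X\<rparr>\<^esub> z = x \<otimes>\<^bsub>W\<lparr>carrier := X\<rparr>\<^esub> (y \<otimes>\<^bsub>W\<lparr>carrier := X\<rparr>\<^esub> z)"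
      using XC by (simp add: W.m_assoc subset_iff)
  next
    fix x assume "x \<in> carrier (W\<lparr>carrier := X\<rparr>)"
    then show "\<one>\<^bsub>W\<lparr>carrier := X\<rparr>\<^esub> \<otimes>\<^bsub>W\<lparr>carrier := X\<rparr>\<^esub> x = x" using XC by (simp add: subset_iff)
  next
    fix x y assume "x \<in> carrier (W\<lparr>carrier := X\<rparr>)" "y \<in> carrier (W\<lparr>carrier := X\<rparr>)"
    then show "x \<otimes>\<^bsub>W\<lparr>carrier := X\<rparr>\<^esub> y = y \<otimes>\<^bsub>W\<lparr>carrier := X\<rparr>\<^esub> x" using comm unfolding X_def by simp
  qed
  interpret H: comm_monoid H by (rule cmH)
  define E where "E = F0 \<union> (\<lambda>x. inv\<^bsub>W\<^esub> x) ` F0"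
  have finE: "finite E" unfolding E_def using F0(1) by simp
  have EX: "E \<subseteq> X"
  proof
    fix e assume "e \<in> E"
    then consider "e \<in> F0" | h where "h \<in> F0" "e = inv\<^bsub>W\<^esub> h" unfolding E_def by blast
    then show "e \<in> X"
    proof cases
      case 1 then show ?thesis unfolding Xgen by (rule generate.incl)
    next
      case 2 then show ?thesis unfolding Xgen by (simp add: generate.inv)
    qed
  qed
  have EH: "E \<subseteq> carrier H" using EX by (simp add: H_def)
  have genH: "carrier H \<subseteq> monoid_generated H E"
  proof
    fix x assume "x \<in> carrier H"
    then have "x \<in> generate W F0" using Xgen by (simp add: H_def)
    then show "x \<in> monoid_generated H E"
    proof induction
      case one
      then show ?case using monoid_generated.mg_one[of H E] by (simp add: H_def)
    next
      case (incl h)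
      have "h \<in> E" "h \<in> carrier W" using incl F0C unfolding E_def by auto
      then show ?case using monoid_generated.mg_mult[of h E "\<one>\<^bsub>H\<^esub>" H] monoid_generated.mg_one[of H E]
        by (simp add: H_def)
    next
      case (inv h)
      have "inv\<^bsub>W\<^esub> h \<in> E" "inv\<^bsub>W\<^esub> h \<in> carrier W" using inv F0C unfolding E_def by auto
      then show ?case using monoid_generated.mg_mult[of "inv\<^bsub>W\<^esub> h" E "\<one>\<^bsub>H\<^esub>" H] monoid_generated.mg_one[of H E]
        by (simp add: H_def)
    next
      case (eng h1 h2)
      then show ?case using H.mg_mult_closed[OF EH] by (simp add: H_def)
    qed
  qed
  obtain R d0 where R: "finite R" "R \<subseteq> roots \<H>" "d0 \<in> D"
    and clD: "closure D = {v. \<forall>\<beta>\<in>R. 0 \<le> sgn (\<beta> d0) * \<beta> v}"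
    using chamber_closure[OF lf assms(2)] by blast
  have integral: "\<beta> (\<rho> x 0) \<in> \<int>" if "\<beta> \<in> roots \<H>" "x \<in> X" for \<beta> x
  proof -
    have lin: "linear \<beta>" and h0: "hyp \<beta> 0 \<in> \<H>" using that(1) by (auto simp: roots_def)
    have "\<rho> x ` hyp \<beta> 0 \<in> \<H>" using ACI h0 that(2) XC by blast
    moreover have "\<rho> x ` hyp \<beta> 0 = translation (\<rho> x 0) ` hyp \<beta> 0"
      using arg_cong[OF tr[OF that(2)], of "\<lambda>f. f ` hyp \<beta> 0"] by (simp only:)
    ultimately have "hyp \<beta> (- \<beta> (\<rho> x 0)) \<in> \<H>" using hyp_translate[OF lin] by simp
    then have "- \<beta> (\<rho> x 0) \<in> \<int>" using that(1) by (simp add: roots_def)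
    then show ?thesis by (metis Ints_minus minus_minus)
  qed
  define Hs where "Hs = (\<lambda>\<beta> x. \<lfloor>sgn (\<beta> d0) * \<beta> (\<rho> x 0)\<rfloor>) ` R"
  have finHs: "finite Hs" unfolding Hs_def using R(1) by simp
  have addH: "\<forall>h\<in>Hs. \<forall>x\<in>carrier H. \<forall>y\<in>carrier H. h (x \<otimes>\<^bsub>H\<^esub> y) = h x + h y"
  proof (intro ballI)
    fix h x y assume hH: "h \<in> Hs" and x: "x \<in> carrier H" and y: "y \<in> carrier H"
    obtain \<beta> where b: "\<beta> \<in> R" and hb: "h = (\<lambda>x. \<lfloor>sgn (\<beta> d0) * \<beta> (\<rho> x 0)\<rfloor>)"
      using hH unfolding Hs_def by blast
    have xX: "x \<in> X" and yX: "y \<in> X" using x y by (auto simp: H_def)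
    have lin: "linear \<beta>" using b R(2) by (auto simp: roots_def)
    have ix: "sgn (\<beta> d0) * \<beta> (\<rho> x 0) \<in> \<int>" using integral[OF _ xX] b R(2) sgn_Ints by (blast intro: Ints_mult)
    have iy: "sgn (\<beta> d0) * \<beta> (\<rho> y 0) \<in> \<int>" using integral[OF _ yX] b R(2) sgn_Ints by (blast intro: Ints_mult)
    have "sgn (\<beta> d0) * \<beta> (\<rho> (x \<otimes>\<^bsub>W\<^esub> y) 0) = sgn (\<beta> d0) * \<beta> (\<rho> x 0) + sgn (\<beta> d0) * \<beta> (\<rho> y 0)"
      using tau_add[OF xX yX] lin by (simp add: linear_add algebra_simps)
    moreover have m: "x \<otimes>\<^bsub>H\<^esub> y = x \<otimes>\<^bsub>W\<^esub> y" by (simp add: H_def)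
    ultimately show "h (x \<otimes>\<^bsub>H\<^esub> y) = h x + h y"
      unfolding hb m using floor_add_Ints[OF ix iy] by (simp only:)
  qed
  have Seq: "{x\<in>carrier H. \<forall>h\<in>Hs. 0 \<le> h x} = {x \<in> transl_part W \<rho>. \<rho> x 0 \<in> closure D}"
  proof -
    have hs: "(\<forall>h\<in>Hs. 0 \<le> h x) \<longleftrightarrow> \<rho> x 0 \<in> closure D" for x
      unfolding Hs_def clD by simp
    have "carrier H = transl_part W \<rho>" by (simp add: H_def X_def)
    then show ?thesis using hs by blast
  qed
  have mgeq: "monoid_generated H F = monoid_generated W F" for F unfolding H_def by (rule mg_update)
  show ?thesis using H.partB[OF finE EH genH finHs addH] unfolding Seq mgeq .
qed

end
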